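(* Fix real numbers $\lambda>0$, $\beta>0$, $\alpha>1$ and $T_{cl}>0$. Let $(N_k)_{k\ge1}$ be positive integers with $N_k\to\infty$, and let $m_k,c_k$ be positive integers with $m_kc_k=N_k$, $m_k\to\infty$ and $c_k\to\infty$. Define $$a_k=\frac{\lambda\beta\alpha m_k}{\alpha m_k-1},\qquad P_{b,k}=\frac{a_k^{c_k}/c_k!}{\sum_{j=0}^{c_k}a_k^{j}/j!},\qquad \mathbb{E}[T_{\text{sys},k}]=\frac{\beta\alpha m_k}{\alpha m_k-1}(1-P_{b,k})+T_{cl}\,P_{b,k}.$$ Then $\lim_{k\to\infty}\mathbb{E}[T_{\text{sys},k}]=\beta$.
   Context: Model: an edge system with $N$ workers is split into $c$ groups of $m$ workers ($N=mc$); jobs arrive as a Poisson process of rate $\lambda$, each job is replicated on the $m$ workers of a free group, and jobs finding all groups busy are blocked and sent to the cloud, where they take expected time $T_{cl}$. Worker service times are Pareto $\mathrm{Pareto}(\beta,\alpha)$ ($\Pr(X>x)=(\beta/x)^\alpha$ for $x\ge\beta$, $\alpha>1$), so the job-computing time (minimum of $m$ copies) has mean $\frac{\beta m\alpha}{m\alpha-1}$. The blocking probability is the Erlang B formula with $c$ servers and offered load $\lambda\frac{\beta m\alpha}{m\alpha-1}$, and the average system time is $(1-P_b)\mathbb{E}[T_{\text{job}}]+P_b T_{cl}$. *)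

theory Defs
  imports "HOL-Analysis.Analysis"
begin

definition offered_load :: "real \<Rightarrow> real \<Rightarrow> real \<Rightarrow> nat \<Rightarrow> real" where
  "offered_load lam beta alpha m = lam * beta * alpha * real m / (alpha * real m - 1)"

definition erlang_B :: "nat \<Rightarrow> real \<Rightarrow> real" where
  "erlang_B c a = (a ^ c / fact c) / (\<Sum>j = 0..c. a ^ j / fact j)"

definition avg_sys_time :: "real \<Rightarrow> real \<Rightarrow> real \<Rightarrow> real \<Rightarrow> nat \<Rightarrow> nat \<Rightarrow> real" where
  "avg_sys_time lam beta alpha Tcl m c =
     (let Pb = erlang_B c (offered_load lam beta alpha m) in
      beta * alpha * real m / (alpha * real m - 1) * (1 - Pb) + Tcl * Pb)"

end

theory Submission
  imports Defs
begin

theorem lemma3: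
  fixes lam beta alpha Tcl :: real and N m c :: "nat \<Rightarrow> nat"
  assumes "lam > 0" and "beta > 0" and "alpha > 1" and "Tcl > 0"
    and "\<And>k. N k > 0" and "\<And>k. m k > 0" and "\<And>k. c k > 0"
    and "\<And>k. m k * c k = N k"
    and "filterlim N at_top sequentially"
    and "filterlim m at_top sequentially"
    and "filterlim c at_top sequentially"
  shows "(\<lambda>k. avg_sys_time lam beta alpha Tcl (m k) (c k)) \<longlonglongrightarrow> beta"
proof -
  define f where "f k = beta * alpha * real (m k) / (alpha * real (m k) - 1)" for k
  define P where "P k = erlang_B (c k) (offered_load lam beta alpha (m k))" for k
  define A where "A = lam * (beta * alpha / (alpha - 1))"
  have mge: "real (m k) \<ge> 1" for k using assms(6)[of k] by simp
  have den: "alpha * real (m k) - 1 \<ge> alpha - 1" for k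
    using mult_left_mono[OF mge[of k], of alpha] assms(3) by simp
  have fpos: "f k \<ge> 0" for k unfolding f_def proof (intro divide_nonneg_nonneg)
    show "0 \<le> alpha * real (m k) - 1" using den[of k] assms(3) by linarith
  qed (use assms(2,3) in auto)
  have fle: "f k \<le> beta * alpha / (alpha - 1)" for k
  proof -
    have "f k = beta * alpha / (alpha - 1 / real (m k))"
      unfolding f_def using mge[of k] by (simp add: field_simps)
    also have "\<dots> \<le> beta * alpha / (alpha - 1)"
    proof (rule divide_left_mono)
      have "1 / real (m k) \<le> 1" using mge[of k] by simp
      moreover have "1 / real (m k) > 0" using mge[of k] by simp
      ultimately show "alpha - 1 \<le> alpha - 1 / real (m k)" by simp
      show "0 < (alpha - 1 / real (m k)) * (alpha - 1)"
        using assms(3) \<open>1 / real (m k) \<le> 1\<close> by (intro mult_pos_pos) auto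
    qed (use assms(2,3) in auto)
    finally show ?thesis .
  qed
  have mreal: "filterlim (\<lambda>k. real (m k)) at_top sequentially"
    using filterlim_compose[OF filterlim_real_sequentially assms(10)] by simp
  have inv0: "(\<lambda>k. 1 / real (m k)) \<longlonglongrightarrow> 0"
    using tendsto_divide_0[OF tendsto_const filterlim_at_top_imp_at_infinity[OF mreal]] by simp
  have "(\<lambda>k. beta * alpha / (alpha - 1 / real (m k))) \<longlonglongrightarrow> beta * alpha / (alpha - 0)"
    by (intro tendsto_intros inv0) (use assms in auto)
  moreover have "f = (\<lambda>k. beta * alpha / (alpha - 1 / real (m k)))"
  proof
    fix k show "f k = beta * alpha / (alpha - 1 / real (m k))"
      unfolding f_def using mge[of k] by (simp add: field_simps)
  qed
  ultimately have flim: "f \<longlonglongrightarrow> beta" using assms by simp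
  have load: "offered_load lam beta alpha (m k) = lam * f k" for k
    unfolding offered_load_def f_def by simp
  have Pnn: "P k \<ge> 0" for k
    unfolding P_def erlang_B_def load using fpos[of k] assms(1)
    by (intro divide_nonneg_nonneg sum_nonneg) auto
  have Ple: "P k \<le> A ^ c k / fact (c k)" for k
  proof -
    define a where "a = lam * f k"
    have a0: "a \<ge> 0" unfolding a_def using fpos[of k] assms(1) by simp
    have aA: "a \<le> A" unfolding a_def A_def using fle[of k] assms(1) by (intro mult_left_mono) auto
    have "(\<Sum>j = 0..c k. a ^ j / fact j) \<ge> (\<Sum>j\<in>{0}. a ^ j / fact j)"
      by (rule sum_mono2) (use a0 in auto)
    hence S: "(\<Sum>j = 0..c k. a ^ j / fact j) \<ge> 1" by simp
    have "P k = (a ^ c k / fact (c k)) / (\<Sum>j = 0..c k. a ^ j / fact j)"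
      unfolding P_def erlang_B_def load a_def ..
    also have "\<dots> \<le> a ^ c k / fact (c k)"
      using divide_left_mono[OF S, of "a ^ c k / fact (c k)"] S a0 by simp
    also have "\<dots> \<le> A ^ c k / fact (c k)"
      by (intro divide_right_mono power_mono aA a0) auto
    finally show ?thesis .
  qed
  have "(\<lambda>n. inverse (fact n) * A ^ n) \<longlonglongrightarrow> 0"
    by (rule summable_LIMSEQ_zero[OF summable_exp])
  hence "(\<lambda>n. A ^ n / fact n) \<longlonglongrightarrow> 0" by (simp add: field_simps)
  hence "(\<lambda>k. A ^ c k / fact (c k)) \<longlonglongrightarrow> 0"
    using filterlim_compose[OF _ assms(11)] by blast
  hence Plim: "P \<longlonglongrightarrow> 0"
    by (intro tendsto_sandwich[of "\<lambda>_. 0" P sequentially "\<lambda>k. A ^ c k / fact (c k)" 0]) (use Pnn Ple in auto)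
  have "(\<lambda>k. f k * (1 - P k) + Tcl * P k) \<longlonglongrightarrow> beta * (1 - 0) + Tcl * 0"
    by (intro tendsto_intros flim Plim)
  thus ?thesis unfolding avg_sys_time_def Let_def f_def[symmetric] P_def[symmetric]
    by simp
qed

end
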